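(* For $s>0$, $$\int_0^1dz\,\ln(1-z^2)\ln\Big(1+\frac{s^2}{z^2}\Big)=\frac{\pi^2}{2}+4(1-\ln2)\,Q_0(s)-2\vartheta^2(s)+2s\,\vartheta(s)\ln\frac{1+s^2}{4}-2s\,\mathrm{Cl}_2[2\vartheta(s)].$$
   Context: $\vartheta(s)=\arctan(1/s)$; $Q_0(s)=-s\,\vartheta(s)-\tfrac12\ln(1+s^2)$; $\mathrm{Cl}_2(z)=\sum_{j\ge1}\sin(jz)/j^2$ is the Clausen function. *)

theory Defs
  imports "HOL-Analysis.Analysis"
begin

definition vartheta :: "real \<Rightarrow> real" where
  "vartheta s = arctan (1 / s)"

definition Q0 :: "real \<Rightarrow> real" where
  "Q0 s = - s * vartheta s - ln (1 + s^2) / 2"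

definition Cl2 :: "real \<Rightarrow> real" where
  "Cl2 z = (\<Sum>j. sin (real (Suc j) * z) / (real (Suc j))^2)"

end

theory Submission
  imports Defs
begin


definition atc :: "real \<Rightarrow> real" where "atc y = (if y = 0 then 1 else arctan y / y)"

lemma isCont_atc: "isCont atc y"
proof (cases "y = 0")
  case True
  have "((\<lambda>y. (arctan y - arctan 0) / (y - 0)) \<longlongrightarrow> inverse (1 + 0\<^sup>2)) (at (0::real))"
    using DERIV_arctan[of 0] unfolding has_field_derivative_iff by simp
  hence "((\<lambda>y. arctan y / y) \<longlongrightarrow> 1) (at (0::real))" by simp
  hence "(atc \<longlongrightarrow> 1) (at 0)"
    by (rule Lim_transform_eventually) (auto simp: atc_def eventually_at intro!: exI[of _ 1])
  thus ?thesis using True by (simp add: isCont_def atc_def)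
next
  case False
  have "isCont (\<lambda>y. arctan y / y) y" using False by (intro continuous_intros) auto
  moreover have "eventually (\<lambda>x. arctan x / x = atc x) (nhds y)"
    using eventually_nhds_in_open[of "-{0}" y] False
    by (auto elim!: eventually_mono) (auto simp: atc_def)
  ultimately show ?thesis using isCont_cong[where f="\<lambda>x. arctan x / x" and x=y and g=atc] by simp
qed



definition Dd :: "real \<Rightarrow> real \<Rightarrow> real" where "Dd t x = (1 + x) + (1 - x) * t^2"
definition hf :: "real \<Rightarrow> real \<Rightarrow> real" where "hf t x = atc (2*t*x / Dd t x) * (2*t / Dd t x)"
definition dhf :: "real \<Rightarrow> real \<Rightarrow> real" where
  "dhf t x = 2*((1+x) - (1-x)*t^2) / ((Dd t x)^2 + 4*t^2*x^2)"

lemma Dd_pos: "x \<in> {0..1} \<Longrightarrow> Dd t x > 0"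
  unfolding Dd_def by (auto intro!: add_pos_nonneg)

lemma hf_pos_x: "x \<in> {0..1} \<Longrightarrow> x \<noteq> 0 \<Longrightarrow> hf t x = arctan (2*t*x / Dd t x) / x"
  using Dd_pos[of x t] unfolding hf_def atc_def by (auto simp: field_simps)

lemma hf_zero: "hf t 0 = 2*t/(1+t^2)"
  unfolding hf_def atc_def Dd_def by simp

lemma inv_aux: "(D::real) > 0 \<Longrightarrow> inverse (1 + (a / D)^2) = D^2/(D^2 + a^2)"
proof -
  assume D: "D > 0"
  have "1 + (a / D)^2 = (D^2 + a^2)/D^2" using D by (simp add: power_divide field_simps)
  thus ?thesis by simp
qed

lemma alg_aux: "(D::real) > 0 \<Longrightarrow> x \<noteq> 0 \<Longrightarrow> D^2 + 4*t^2*x^2 > 0 \<Longrightarrow>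
  D^2 / (D^2 + 4*t^2*x^2) * (2 * x * D - 4 * (t * (x * (t * (1 - x))))) / (D * (D * x))
   = (2*D - 4*t^2*(1-x)) / (D^2 + 4*t^2*x^2)"
proof -
  assume a: "D > 0" "x \<noteq> 0" "D^2 + 4*t^2*x^2 > 0"
  have "(2 * x * D - 4 * (t * (x * (t * (1 - x))))) = x * (2*D - 4*t^2*(1-x))"
    by (simp add: algebra_simps power2_eq_square)
  hence "D^2 / (D^2 + 4*t^2*x^2) * (2 * x * D - 4 * (t * (x * (t * (1 - x))))) / (D * (D * x))
     = (D^2 * x) * (2*D - 4*t^2*(1-x)) / ((D^2 * x) * (D^2 + 4*t^2*x^2))"
    by (simp add: power2_eq_square)
  also have "\<dots> = (2*D - 4*t^2*(1-x)) / (D^2 + 4*t^2*x^2)"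
    using a by (subst mult_divide_mult_cancel_left) auto
  finally show ?thesis .
qed

lemma hf_deriv:
  assumes x: "x \<in> {0..1}"
  shows "((\<lambda>t. hf t x) has_real_derivative dhf t x) (at t)"
proof (cases "x = 0")
  case True
  have "((\<lambda>t. 2*t/(1+t^2)) has_real_derivative dhf t x) (at t)"
    unfolding True dhf_def Dd_def
    apply (auto intro!: derivative_eq_intros)
     apply (metis power2_less_0 add_less_same_cancel1 zero_less_one less_add_same_cancel2 add_pos_nonneg zero_le_power2 not_one_le_zero)
    apply (simp add: power2_eq_square algebra_simps)
    done
  thus ?thesis using True by (simp add: hf_zero)
next
  case False
  have D: "Dd t x > 0" using Dd_pos[OF x] .
  have eq: "(\<lambda>t. hf t x) = (\<lambda>t. arctan (2*t*x / ((1 + x) + (1 - x) * t^2)) / x)"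
    using hf_pos_x[OF x False] by (auto simp: Dd_def)
  have "((\<lambda>t. arctan (2*t*x / ((1 + x) + (1 - x) * t^2)) / x) has_real_derivative dhf t x) (at t)"
    using D False 
    apply (auto intro!: derivative_eq_intros simp: Dd_def)
  proof -
    let ?D = "1 + x + (1 - x) * t\<^sup>2"
    assume "?D > 0" "x \<noteq> 0"
    have p1: "1 + (2 * t * x / ?D)\<^sup>2 > 0" by (simp add: add_pos_nonneg)
    have p2: "?D^2 + 4*t^2*x^2 > 0" using \<open>?D > 0\<close> by (simp add: add_pos_nonneg)
    have e1: "inverse (1 + (2 * t * x / ?D)\<^sup>2) = ?D^2 / (?D^2 + 4*t^2*x^2)"
      using inv_aux[OF \<open>?D > 0\<close>, of "2*t*x"] by (simp add: power_mult_distrib)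
    show "inverse (1 + (2 * t * x / ?D)\<^sup>2) *
     (2 * x * ?D - 4 * (t * (x * (t * (1 - x))))) / (?D * (?D * x)) = dhf t x"
      unfolding e1 dhf_def Dd_def using alg_aux[OF \<open>?D > 0\<close> \<open>x \<noteq> 0\<close> p2]
      by (simp add: algebra_simps)
  qed
  thus ?thesis using eq by simp
qed



definition Cf :: "real \<Rightarrow> real" where "Cf t = integral {0..1} (hf t)"

lemma cont_hf: "continuous_on {0..1} (hf t)"
proof -
  have ca: "continuous_on UNIV atc" by (simp add: continuous_at_imp_continuous_on isCont_atc)
  have "continuous_on {0..1} (\<lambda>x. 2*t*x / Dd t x)"
    unfolding Dd_def
  proof (intro continuous_intros ballI)
    fix x :: real assume "x \<in> {0..1}"
    thus "1 + x + (1 - x) * t\<^sup>2 \<noteq> 0" using Dd_pos[of x t] unfolding Dd_def by simp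
  qed
  hence "continuous_on {0..1} (\<lambda>x. atc (2*t*x / Dd t x))"
    by (rule continuous_on_compose2[OF ca]) auto
  moreover have "continuous_on {0..1} (\<lambda>x. 2*t / Dd t x)"
    unfolding Dd_def
  proof (intro continuous_intros ballI)
    fix x :: real assume "x \<in> {0..1}"
    thus "1 + x + (1 - x) * t\<^sup>2 \<noteq> 0" using Dd_pos[of x t] unfolding Dd_def by simp
  qed
  ultimately show ?thesis unfolding hf_def by (rule continuous_on_mult)
qed

lemma cont_dhf: "continuous_on ({0<..} \<times> {0..1}) (\<lambda>(t, x). dhf t x)"
proof -
  have "continuous_on ({0<..} \<times> {0..1}) (\<lambda>p. 2*((1+snd p) - (1-snd p)*(fst p)^2) /
        ((Dd (fst p) (snd p))^2 + 4*(fst p)^2*(snd p)^2))"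
    unfolding Dd_def
  proof (intro continuous_intros ballI)
    fix p :: "real \<times> real" assume "p \<in> {0<..} \<times> {0..1}"
    hence "Dd (fst p) (snd p) > 0" by (intro Dd_pos) auto
    hence "(Dd (fst p) (snd p))^2 + 4*(fst p)^2*(snd p)^2 > 0" by (simp add: add_pos_nonneg)
    thus "(1 + snd p + (1 - snd p) * (fst p)\<^sup>2)\<^sup>2 + 4 * (fst p)\<^sup>2 * (snd p)\<^sup>2 \<noteq> 0"
      unfolding Dd_def by simp
  qed
  thus ?thesis by (simp add: case_prod_unfold dhf_def)
qed

lemma Cf_deriv0:
  assumes t: "t > 0"
  shows "(Cf has_real_derivative integral {0..1} (dhf t)) (at t)"
proof -
  have "(Cf has_real_derivative integral (cbox 0 1) (dhf t)) (at t within {0<..})"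
    unfolding Cf_def cbox_interval[symmetric]
  proof (rule leibniz_rule_field_derivative[where fx=dhf])
    fix x t' :: real assume "t' \<in> {0<..}" "x \<in> cbox 0 1"
    hence "x \<in> {0..1}" by simp
    thus "((\<lambda>t. hf t x) has_field_derivative dhf t' x) (at t' within {0<..})"
      by (rule has_field_derivative_at_within[OF hf_deriv])
  next
    fix t' :: real
    show "hf t' integrable_on cbox 0 1"
      using cont_hf by (simp add: integrable_continuous_interval)
  next
    show "continuous_on ({0<..} \<times> cbox 0 1) (\<lambda>(t, x). dhf t x)" using cont_dhf by simp
  next
    show "t \<in> {0<..}" using t by simp
  next
    show "convex {0::real<..}" by (simp add: convex_real_interval)
  qed
  thus ?thesis using t at_within_open[of t "{0<..}"] by simp
qed

lemma int_dhf:
  assumes t: "t > 0"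
  shows "integral {0..1} (dhf t) = ln (4/(1+t^2))/(1+t^2)"
proof -
  define G where "G x = ln ((Dd t x)^2 + 4*t^2*x^2)/(1+t^2)" for x
  have "(dhf t has_integral (G 1 - G 0)) {0..1}"
  proof (rule fundamental_theorem_of_calculus)
    fix x :: real assume x: "x \<in> {0..1}"
    have D: "Dd t x > 0" using Dd_pos[OF x] .
    define Q where "Q = (Dd t x)^2 + 4*t^2*x^2"
    have Q: "Q > 0" using D unfolding Q_def by (simp add: add_pos_nonneg)
    have "((\<lambda>x. (1 + x + (1 - x) * t\<^sup>2)\<^sup>2 + 4 * t\<^sup>2 * x\<^sup>2) has_real_derivative
          2 * Dd t x * (1 - t^2) + 8*t^2*x) (at x)"
      unfolding Dd_def by (auto intro!: derivative_eq_intros simp: algebra_simps power2_eq_square)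
    hence "(G has_real_derivative (2 * Dd t x * (1 - t^2) + 8*t^2*x) / Q / (1+t^2)) (at x)"
      unfolding G_def using Q add_pos_nonneg[OF zero_less_one zero_le_power2[of t]] unfolding Q_def Dd_def
      by (auto intro!: derivative_eq_intros)
    moreover have "(2 * Dd t x * (1 - t^2) + 8*t^2*x) / Q / (1+t^2) = dhf t x"
    proof -
      have "2 * Dd t x * (1 - t^2) + 8*t^2*x = (1+t^2) * (2*((1+x) - (1-x)*t^2))"
        unfolding Dd_def by (simp add: algebra_simps power2_eq_square)
      moreover have "1 + t^2 > 0" by (simp add: add_pos_nonneg)
      ultimately show ?thesis unfolding dhf_def Q_def[symmetric] by simp
    qed
    ultimately have "(G has_real_derivative dhf t x) (at x)" by simp
    thus "(G has_vector_derivative dhf t x) (at x within {0..1})"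
      by (auto simp: has_real_derivative_iff_has_vector_derivative intro: has_vector_derivative_at_within)
  qed simp
  moreover have "G 1 - G 0 = ln (4/(1+t^2))/(1+t^2)"
  proof -
    have p: "1 + t^2 > 0" by (simp add: add_pos_nonneg)
    have "G 1 = ln (4*(1+t^2))/(1+t^2)" unfolding G_def Dd_def by (simp add: algebra_simps)
    moreover have "G 0 = ln ((1+t^2)^2)/(1+t^2)" unfolding G_def Dd_def by simp
    moreover have "ln (4*(1+t^2)) - ln ((1+t^2)^2) = ln (4/(1+t^2))"
      using p ln_mult[of 4 "1+t^2"] by (simp add: ln_div ln_realpow)
    ultimately show ?thesis by (simp add: diff_divide_distrib[symmetric])
  qed
  ultimately show ?thesis by (simp add: integral_unique)
qed

lemma Cf_deriv:
  assumes t: "t > 0"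
  shows "(Cf has_real_derivative ln (4/(1+t^2))/(1+t^2)) (at t)"
  using Cf_deriv0[OF t] int_dhf[OF t] by simp



lemma sin_cos_2vt:
  assumes t: "t > 0"
  shows "sin (2 * vartheta t) = 2*t/(1+t^2)" "cos (2 * vartheta t) = (t^2-1)/(1+t^2)"
proof -
  have p: "1 + (1/t)^2 > 0" by (simp add: add_pos_nonneg)
  have s: "sin (vartheta t) = (1/t) / sqrt (1 + (1/t)^2)" unfolding vartheta_def by (rule sin_arctan)
  have c: "cos (vartheta t) = 1 / sqrt (1 + (1/t)^2)" unfolding vartheta_def by (rule cos_arctan)
  have sq: "sqrt (1 + (1/t)^2) * sqrt (1 + (1/t)^2) = 1 + (1/t)^2" using p by simp
  have "sin (2 * vartheta t) = 2 * (1/t) / (sqrt (1 + (1/t)^2) * sqrt (1 + (1/t)^2))"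
    unfolding sin_double s c by simp
  also have "\<dots> = 2 * (1/t) / (1 + (1/t)^2)" by (simp only: sq)
  also have "\<dots> = 2*t/(1+t^2)" using t by (simp add: field_simps power2_eq_square)
  finally show "sin (2 * vartheta t) = 2*t/(1+t^2)" .
  have "cos (2 * vartheta t) = (1 - (1/t)^2) / (1 + (1/t)^2)"
    unfolding cos_double s c using p by (simp add: power_divide diff_divide_distrib power_mult_distrib)
  also have "\<dots> = (t^2-1)/(1+t^2)"
  proof -
    have a: "t*t > 0" "1 + t*t > 0" using t by (auto simp: add_pos_nonneg)
    have "(1 - (1/t)^2) / (1 + (1/t)^2) = ((t*t) * (t*t-1)) / ((t*t) * (1 + t*t))"
      using t by (simp add: field_simps power2_eq_square)
    also have "\<dots> = (t * t - 1) / (1 + t * t)" using a t by simp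
    finally show ?thesis by (simp add: power2_eq_square)
  qed
  finally show "cos (2 * vartheta t) = (t^2-1)/(1+t^2)" .
qed

lemma series_arctan:
  fixes x phi :: real
  assumes x: "0 \<le> x" "x < 1"
  shows "(\<lambda>n. x^n * sin (real n * phi) / real n) sums arctan (x * sin phi / (1 - x * cos phi))"
proof -
  define w where "w = complex_of_real x * cis phi"
  have nw: "cmod (-w) < 1" using x unfolding w_def by (simp add: norm_mult)
  have "(\<lambda>n. - ((-(-w))^n) / of_nat n) sums ln (1 + (-w))" by (rule Ln_series'[OF nw])
  hence "(\<lambda>n. Im (- (w^n) / of_nat n)) sums Im (ln (1 - w))" by (intro sums_Im) simp
  moreover have "(\<lambda>n. Im (- (w^n) / of_nat n)) = (\<lambda>n. - (x^n * sin (real n * phi) / real n))"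
  proof (rule ext)
    fix n :: nat
    show "Im (- (w^n) / of_nat n) = - (x^n * sin (real n * phi) / real n)"
  proof -
    have "Im (cis phi ^ n) = sin (real n * phi)" by (simp add: Complex.DeMoivre)
    thus ?thesis unfolding w_def by (simp add: power_mult_distrib)
  qed
  qed
  moreover have "Im (ln (1 - w)) = - arctan (x * sin phi / (1 - x * cos phi))"
  proof -
    have re: "Re (1 - w) > 0"
    proof -
      have "x * cos phi \<le> x * 1" using x by (intro mult_left_mono) auto
      thus ?thesis using x unfolding w_def by simp
    qed
    hence "1 - w \<noteq> 0" by auto
    hence "Im (ln (1 - w)) = arctan (Im (1 - w) / Re (1 - w))" using re by (simp add: Im_Ln_eq)
    also have "\<dots> = - arctan (x * sin phi / (1 - x * cos phi))"
      unfolding w_def by (simp add: arctan_minus[symmetric])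
    finally show ?thesis .
  qed
  ultimately have "(\<lambda>n. - (x^n * sin (real n * phi) / real n)) sums (- arctan (x * sin phi / (1 - x * cos phi)))"
    by metis
  thus ?thesis using sums_minus by fastforce
qed



lemma summable_inv_Suc_sq: "summable (\<lambda>j::nat. 1 / (real (Suc j))^2)"
proof -
  have "summable (\<lambda>n::nat. inverse (real n ^ 2))" by (rule inverse_power_summable) simp
  hence "summable (\<lambda>n::nat. inverse (real (Suc n) ^ 2))" by (subst summable_Suc_iff)
  thus ?thesis by (simp add: inverse_eq_divide)
qed

lemma Cf_Cl2:
  assumes t: "t > 0"
  shows "Cf t = Cl2 (2 * vartheta t)"
proof -
  define phi where "phi = 2 * vartheta t"
  define c where "c j = sin (real (Suc j) * phi) / real (Suc j)" for j :: nat
  define f where "f j x = x^j * indicator {0..1} x * c j" for j :: nat and x :: real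
  have cb: "\<bar>c j\<bar> \<le> 1 / real (Suc j)" for j
    unfolding c_def by (simp add: abs_sin_le_one divide_right_mono)
  have ip: "integrable lborel (\<lambda>x::real. x^j * indicator {0..1} x)" for j
  proof -
    have "set_integrable lborel {0..1::real} (\<lambda>x. x^j)"
      by (rule borel_integrable_atLeastAtMost') (intro continuous_intros)
    thus ?thesis unfolding set_integrable_def by (simp add: mult.commute)
  qed
  have int_f: "integrable lborel (f j)" for j
    unfolding f_def using ip[of j] by (rule integrable_mult_left)
  have intf: "integral\<^sup>L lborel (f j) = c j / real (Suc j)" for j
    unfolding f_def using integral_power[of 0 1 j] by simp
  have intnf: "(\<integral>x. norm (f j x) \<partial>lborel) = \<bar>c j\<bar> / real (Suc j)" for j
  proof -
    have "(\<lambda>x. norm (f j x)) = (\<lambda>x. x^j * indicator {0..1} x * \<bar>c j\<bar>)"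
      by (rule ext) (auto simp: f_def abs_mult indicator_def)
    thus ?thesis using integral_power[of 0 1 j] by simp
  qed
  have sum_int: "summable (\<lambda>j. \<integral>x. norm (f j x) \<partial>lborel)"
    unfolding intnf
  proof (rule summable_comparison_test[OF _ summable_inv_Suc_sq], intro exI allI impI)
    fix j :: nat
    have "\<bar>c j\<bar> / real (Suc j) \<le> (1 / real (Suc j)) / real (Suc j)"
      using cb[of j] by (intro divide_right_mono) auto
    thus "norm (\<bar>c j\<bar> / real (Suc j)) \<le> 1 / (real (Suc j))^2"
      by (simp add: power2_eq_square)
  qed
  have ser: "(\<lambda>j. f j x) sums (indicator {0..1} x * hf t x)" if x: "x \<noteq> 0" "x \<noteq> 1" for x
  proof (cases "x \<in> {0..1}")
    case False
    thus ?thesis unfolding f_def by simp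
  next
    case True
    hence x01: "0 < x" "x < 1" using x by auto
    define A where "A = arctan (x * sin phi / (1 - x * cos phi))"
    have "(\<lambda>n. x^n * sin (real n * phi) / real n) sums A"
      unfolding A_def using x01 by (intro series_arctan) auto
    hence "(\<lambda>n. x^(Suc n) * sin (real (Suc n) * phi) / real (Suc n)) sums A"
      by (subst sums_Suc_iff) simp
    hence "(\<lambda>n. x^(Suc n) * sin (real (Suc n) * phi) / real (Suc n) / x) sums (A / x)"
      by (rule sums_divide)
    moreover have "(\<lambda>n. x^(Suc n) * sin (real (Suc n) * phi) / real (Suc n) / x) = (\<lambda>j. f j x)"
      using True x01 by (auto simp: f_def c_def)
    moreover have "A / x = indicator {0..1} x * hf t x"
    proof -
      have sc: "sin phi = 2*t/(1+t^2)" "cos phi = (t^2-1)/(1+t^2)"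
        unfolding phi_def using sin_cos_2vt[OF t] by auto
      have p: "1 + t^2 > 0" by (simp add: add_pos_nonneg)
      have "1 - x * cos phi = Dd t x / (1 + t^2)"
        unfolding sc Dd_def using p by (simp add: field_simps)
      hence "x * sin phi / (1 - x * cos phi) = (x * (2*t) / (1+t^2)) / (Dd t x / (1 + t^2))"
        unfolding sc by simp
      also have "\<dots> = 2*t*x / Dd t x" using p Dd_pos[OF True, of t] by (simp add: mult.commute)
      finally have "x * sin phi / (1 - x * cos phi) = 2*t*x / Dd t x" .
      thus ?thesis unfolding A_def using hf_pos_x[OF True x(1), of t] True by simp
    qed
    ultimately show ?thesis by simp
  qed
  have AEs: "AE x in lborel. summable (\<lambda>j. norm (f j x))"
    using AE_lborel_singleton[of 1]
  proof (rule eventually_mono)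
    fix x :: real assume x: "x \<noteq> 1"
    show "summable (\<lambda>j. norm (f j x))"
    proof (cases "x \<in> {0..1}")
      case False thus ?thesis unfolding f_def by simp
    next
      case True
      hence x01: "0 \<le> x" "x < 1" using x by auto
      show ?thesis
      proof (rule summable_comparison_test[OF _ summable_geometric[of x]], intro exI allI impI)
        fix j :: nat
        have "\<bar>c j\<bar> \<le> 1" using cb[of j] by (rule order_trans) simp
        hence "x^j * \<bar>c j\<bar> \<le> x^j * 1" using x01 by (intro mult_left_mono) auto
        thus "norm (norm (f j x)) \<le> x^j" using True x01 by (simp add: f_def abs_mult)
      qed (use x01 in auto)
    qed
  qed
  have i1: "integrable lborel (\<lambda>x. indicator {0..1} x * hf t x)"
    using borel_integrable_atLeastAtMost'[OF cont_hf] by (simp add: set_integrable_def)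
  have i2: "integrable lborel (\<lambda>x. \<Sum>j. f j x)"
    by (rule integrable_suminf[OF int_f AEs sum_int])
  have "Cf t = (LINT x:{0..1}|lborel. hf t x)"
    unfolding Cf_def
    by (rule set_borel_integral_eq_integral(2)[symmetric], rule borel_integrable_atLeastAtMost'[OF cont_hf])
  also have "\<dots> = (\<integral>x. indicator {0..1} x * hf t x \<partial>lborel)"
    by (simp add: set_lebesgue_integral_def)
  also have "\<dots> = (\<integral>x. (\<Sum>j. f j x) \<partial>lborel)"
  proof (rule integral_cong_AE)
    show "AE x in lborel. indicator {0..1} x * hf t x = (\<Sum>j. f j x)"
      using AE_lborel_singleton[of 0] AE_lborel_singleton[of 1]
      by eventually_elim (use ser in \<open>simp add: sums_iff\<close>)
  qed (use borel_measurable_integrable[OF i1] borel_measurable_integrable[OF i2] in auto)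
  also have "\<dots> = (\<Sum>j. integral\<^sup>L lborel (f j))"
    by (rule integral_suminf[OF int_f AEs sum_int])
  also have "\<dots> = Cl2 phi"
    unfolding Cl2_def intf c_def by (simp add: power2_eq_square)
  finally show ?thesis unfolding phi_def .
qed



definition Rhs :: "real \<Rightarrow> real" where
  "Rhs s = pi^2 / 2 + 4 * (1 - ln 2) * Q0 s - 2 * (vartheta s)^2
             + 2 * s * vartheta s * ln ((1 + s^2) / 4)
             - 2 * s * Cl2 (2 * vartheta s)"

definition Rf :: "real \<Rightarrow> real" where
  "Rf s = pi^2 / 2 + 4 * (1 - ln 2) * Q0 s - 2 * (vartheta s)^2
             + 2 * s * vartheta s * ln ((1 + s^2) / 4)
             - 2 * s * Cf s"

lemma vt_deriv:
  assumes "t \<noteq> 0"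
  shows "(vartheta has_real_derivative (-1/(1+t^2))) (at t)"
proof -
  have "((\<lambda>t. arctan (1/t)) has_real_derivative (-1/(1+t^2))) (at t)"
    using assms by (auto intro!: derivative_eq_intros simp: field_simps power2_eq_square)
  thus ?thesis unfolding vartheta_def[abs_def] .
qed

lemma R_alg:
  fixes v L l C t p Lq l4 :: real
  assumes p: "p = 1 + t^2" "p > 0" and Lq: "Lq = L - 2*l" and l4: "l4 = 2*l - L"
  shows "- 4 * (1 - l) * v - (- 4 * v / p) + (2 * v * Lq - 2 * t * Lq / p + 4 * t^2 * v / p)
         - (2 * C + 2 * t * l4 / p) = 2 * v * L - 2 * C"
proof -
  have "4 * v / p + 4 * t^2 * v / p = 4 * v * (1 + t^2) / p" by (simp add: add_divide_distrib algebra_simps)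
  hence e: "4 * v / p + 4 * t^2 * v / p = 4 * v" using p by simp
  have "- 4 * (1 - l) * v - (- 4 * v / p) + (2 * v * Lq - 2 * t * Lq / p + 4 * t^2 * v / p)
         - (2 * C + 2 * t * l4 / p) = - 4 * (1 - l) * v + (4 * v / p + 4 * t^2 * v / p) + 2 * v * Lq
          - 2 * t * (Lq + l4) / p - 2 * C" by (simp add: algebra_simps add_divide_distrib diff_divide_distrib)
  also have "\<dots> = 2 * v * L - 2 * C" unfolding e Lq l4 by (simp add: algebra_simps)
  finally show ?thesis .
qed

lemma Rf_deriv:
  assumes t: "t > 0"
  shows "(Rf has_real_derivative (2 * vartheta t * ln (1+t^2) - 2 * Cf t)) (at t)"
proof -
  define p where "p = 1 + t^2"
  have p: "p > 0" unfolding p_def by (simp add: add_pos_nonneg)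
  have vd: "(vartheta has_real_derivative (-1/p)) (at t)" using vt_deriv t unfolding p_def by simp
  have lq: "ln ((1 + t^2)/4) = ln (1+t^2) - 2 * ln 2"
    using p unfolding p_def using ln_realpow[of 2 2] by (simp add: ln_div)
  have l4: "ln (4/(1 + t^2)) = 2 * ln 2 - ln (1+t^2)"
    using p unfolding p_def using ln_realpow[of 2 2] by (simp add: ln_div)
  have dl: "((\<lambda>s. ln (1 + s^2)) has_real_derivative 2*t/p) (at t)"
    using p unfolding p_def by (auto intro!: derivative_eq_intros)
  have "((\<lambda>s. - (s * vartheta s) - ln (1 + s^2) / 2) has_real_derivative
        - (1 * vartheta t + (-1/p) * t) - (2*t/p) / 2) (at t)"
    by (intro DERIV_diff DERIV_minus DERIV_mult[OF DERIV_ident vd] DERIV_cdivide dl)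
  moreover have "- (1 * vartheta t + (-1/p) * t) - (2*t/p) / 2 = - vartheta t" by simp
  ultimately have dQ: "(Q0 has_real_derivative - vartheta t) (at t)"
    unfolding Q0_def[abs_def] by simp
  have dV: "((\<lambda>s. (vartheta s)^2) has_real_derivative 2 * vartheta t * (-1/p)) (at t)"
    using vd by (auto intro!: derivative_eq_intros)
  have dL: "((\<lambda>s. ln ((1 + s^2)/4)) has_real_derivative 2*t/p) (at t)"
    using p unfolding p_def by (auto intro!: derivative_eq_intros simp: field_simps)
  have dT: "((\<lambda>s. s * vartheta s * ln ((1 + s^2)/4)) has_real_derivative
       vartheta t * ln ((1 + t^2)/4) + t * (-1/p) * ln ((1 + t^2)/4) + t * vartheta t * (2*t/p)) (at t)"
    using DERIV_mult[OF DERIV_mult[OF DERIV_ident vd] dL] by (simp add: algebra_simps)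
  have dC: "((\<lambda>s. s * Cf s) has_real_derivative Cf t + t * (ln (4/(1+t^2))/p)) (at t)"
    using DERIV_mult[OF DERIV_ident Cf_deriv[OF t]] unfolding p_def by (simp add: algebra_simps)
  have eqRf: "Rf = (\<lambda>s. pi^2 / 2 + 4 * (1 - ln 2) * Q0 s - 2 * (vartheta s)^2
             + 2 * (s * vartheta s * ln ((1 + s^2) / 4)) - 2 * (s * Cf s))"
    unfolding Rf_def by (auto simp: algebra_simps)
  have d: "(Rf has_real_derivative 0 + 4 * (1 - ln 2) * (- vartheta t) - 2 * (2 * vartheta t * (-1/p))
        + 2 * (vartheta t * ln ((1 + t^2)/4) + t * (-1/p) * ln ((1 + t^2)/4) + t * vartheta t * (2*t/p))
        - 2 * (Cf t + t * (ln (4/(1+t^2))/p))) (at t)"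
    unfolding eqRf
    by (intro DERIV_diff DERIV_add DERIV_cmult dQ dV dT dC DERIV_const)
  have e: "0 + 4 * (1 - ln 2) * (- vartheta t) - 2 * (2 * vartheta t * (-1/p))
        + 2 * (vartheta t * ln ((1 + t^2)/4) + t * (-1/p) * ln ((1 + t^2)/4) + t * vartheta t * (2*t/p))
        - 2 * (Cf t + t * (ln (4/(1+t^2))/p)) = 2 * vartheta t * ln (1+t^2) - 2 * Cf t"
    using R_alg[OF p_def p lq l4, of "vartheta t" "Cf t"]
    by (simp add: algebra_simps power2_eq_square)
  show ?thesis using d unfolding e .
qed



lemma Cl2_bound: "\<bar>Cl2 z\<bar> \<le> (\<Sum>j. 1 / (real (Suc j))^2)"
proof -
  have b: "\<bar>sin (real (Suc j) * z) / (real (Suc j))^2\<bar> \<le> 1 / (real (Suc j))^2" for j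
    by (simp add: abs_sin_le_one divide_right_mono)
  have sa: "summable (\<lambda>j. \<bar>sin (real (Suc j) * z) / (real (Suc j))^2\<bar>)"
    by (rule summable_comparison_test[OF _ summable_inv_Suc_sq]) (use b in auto)
  have "\<bar>Cl2 z\<bar> \<le> (\<Sum>j. \<bar>sin (real (Suc j) * z) / (real (Suc j))^2\<bar>)"
    unfolding Cl2_def by (rule summable_rabs[OF sa])
  also have "\<dots> \<le> (\<Sum>j. 1 / (real (Suc j))^2)"
    by (rule suminf_le[OF b sa summable_inv_Suc_sq])
  finally show ?thesis .
qed

lemma vt_lim: "(vartheta \<longlongrightarrow> pi/2) (at_right 0)"
proof -
  have "filterlim (\<lambda>s::real. 1/s) at_top (at_right 0)"
    using filterlim_inverse_at_top_right by (simp add: inverse_eq_divide)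
  from filterlim_compose[OF tendsto_arctan_at_top this]
  show ?thesis unfolding vartheta_def[abs_def] .
qed

lemma Rhs_lim: "(Rhs \<longlongrightarrow> 0) (at_right 0)"
proof -
  define B where "B = (\<Sum>j. 1 / (real (Suc j))^2)"
  have l1: "((\<lambda>s. pi^2 / 2 + 4 * (1 - ln 2) * Q0 s - 2 * (vartheta s)^2
             + 2 * s * vartheta s * ln ((1 + s^2) / 4)) \<longlongrightarrow>
        pi^2 / 2 + 4 * (1 - ln 2) * (- 0 * (pi/2) - ln (1 + 0^2) / 2) - 2 * (pi/2)^2
             + 2 * 0 * (pi/2) * ln ((1 + 0^2) / 4)) (at_right 0)"
    unfolding Q0_def by (intro tendsto_intros vt_lim) auto
  have l2: "((\<lambda>s. 2 * s * Cl2 (2 * vartheta s)) \<longlongrightarrow> 0) (at_right 0)"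
  proof (rule Lim_null_comparison)
    have cb: "\<bar>Cl2 z\<bar> \<le> B" for z unfolding B_def by (rule Cl2_bound)
    show "\<forall>\<^sub>F s in at_right 0. norm (2 * s * Cl2 (2 * vartheta s)) \<le> 2 * \<bar>s\<bar> * B"
      by (intro always_eventually allI)
        (auto simp: abs_mult intro!: mult_left_mono cb)
    show "((\<lambda>s. 2 * \<bar>s\<bar> * B) \<longlongrightarrow> 0) (at_right 0)"
      by (rule tendsto_eq_intros refl | simp)+
  qed
  have "((\<lambda>s. (pi^2 / 2 + 4 * (1 - ln 2) * Q0 s - 2 * (vartheta s)^2
             + 2 * s * vartheta s * ln ((1 + s^2) / 4)) - 2 * s * Cl2 (2 * vartheta s)) \<longlongrightarrow>
        (pi^2 / 2 + 4 * (1 - ln 2) * (- 0 * (pi/2) - ln (1 + 0^2) / 2) - 2 * (pi/2)^2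
             + 2 * 0 * (pi/2) * ln ((1 + 0^2) / 4)) - 0) (at_right 0)"
    by (rule tendsto_diff[OF l1 l2])
  moreover have "(pi^2 / 2 + 4 * (1 - ln 2) * (- 0 * (pi/2) - ln (1 + 0^2) / 2) - 2 * (pi/2)^2
             + 2 * 0 * (pi/2) * ln ((1 + 0^2) / 4)) - 0 = (0::real)"
    by (simp add: power2_eq_square)
  ultimately show ?thesis unfolding Rhs_def[abs_def] by simp
qed

lemma Rhs_Rf: "t > 0 \<Longrightarrow> Rhs t = Rf t"
  unfolding Rhs_def Rf_def using Cf_Cl2 by simp

lemma Rhs_deriv:
  assumes t: "t > 0"
  shows "(Rhs has_real_derivative (2 * vartheta t * ln (1+t^2) - 2 * Cf t)) (at t)"
  by (rule has_field_derivative_transform_within_open[OF Rf_deriv[OF t], of "{0<..}"])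
     (use t Rhs_Rf in auto)

lemma Rhs_int:
  assumes s: "s > 0"
  shows "((\<lambda>t. 2 * (Cf t - vartheta t * ln (1+t^2))) has_integral (- Rhs s)) {0..s}"
proof -
  define g where "g t = (if t = 0 then 0 else - Rhs t)" for t
  have gd: "(g has_real_derivative 2 * (Cf t - vartheta t * ln (1+t^2))) (at t)" if t: "t > 0" for t
  proof -
    have "((\<lambda>t. - Rhs t) has_real_derivative - (2 * vartheta t * ln (1+t^2) - 2 * Cf t)) (at t)"
      by (rule DERIV_minus[OF Rhs_deriv[OF t]])
    hence "((\<lambda>t. - Rhs t) has_real_derivative 2 * (Cf t - vartheta t * ln (1+t^2))) (at t)"
      by (simp add: algebra_simps)
    thus ?thesis
      by (rule has_field_derivative_transform_within_open[of _ _ _ "{0<..}"]) (use t in \<open>auto simp: g_def\<close>)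
  qed
  have "((\<lambda>t. 2 * (Cf t - vartheta t * ln (1+t^2))) has_integral (g s - g 0)) {0..s}"
  proof (rule fundamental_theorem_of_calculus_interior)
    show "continuous_on {0..s} g"
      unfolding continuous_on_eq_continuous_within
    proof
      fix x assume x: "x \<in> {0..s}"
      show "continuous (at x within {0..s}) g"
      proof (cases "x = 0")
        case False
        hence "x > 0" using x by auto
        from DERIV_isCont[OF gd[OF this]] show ?thesis by (rule continuous_at_imp_continuous_within)
      next
        case True
        have lim: "((\<lambda>t. - Rhs t) \<longlongrightarrow> 0) (at_right 0)" using tendsto_minus[OF Rhs_lim] by simp
        have ev: "eventually (\<lambda>t. - Rhs t = g t) (at_right (0::real))"
          using eventually_at_right_less[of "0::real"] by (rule eventually_mono) (simp add: g_def)
        have "(g \<longlongrightarrow> 0) (at_right 0)" by (rule Lim_transform_eventually[OF lim ev])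
        hence "(g \<longlongrightarrow> 0) (at 0 within {0<..s})"
          by (rule tendsto_mono[rotated]) (intro at_le, auto)
        moreover have "at 0 within {0<..s} = at (0::real) within {0..s}"
          unfolding at_within_def by (rule arg_cong[where f="\<lambda>A. inf (nhds 0) (principal A)"]) auto
        ultimately show ?thesis using True by (simp add: continuous_within g_def)
      qed
    qed
  next
    fix x assume "x \<in> {0<..<s}"
    hence "x > 0" by simp
    from gd[OF this] show "(g has_vector_derivative 2 * (Cf x - vartheta x * ln (1+x^2))) (at x)"
      by (simp add: has_real_derivative_iff_has_vector_derivative)
  qed (use s in simp)
  moreover have "g s - g 0 = - Rhs s" using s by (simp add: g_def)
  ultimately show ?thesis by simp
qed



lemma arctan_diff:
  fixes a b :: real
  assumes "a \<ge> 0" "b \<ge> 0"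
  shows "arctan a - arctan b = arctan ((a - b) / (1 + a * b))"
proof -
  have a0: "arctan a \<ge> 0" "arctan b \<ge> 0" using assms by (simp_all add: zero_le_arctan_iff)
  have bds: "- (pi/2) < arctan a - arctan b" "arctan a - arctan b < pi/2"
    using a0 arctan_ubound[of a] arctan_ubound[of b] by linarith+
  have "tan (arctan a - arctan b) = (a - b) / (1 + a * b)"
    using tan_diff[of "arctan a" "arctan b"] cos_gt_zero_pi[OF bds] by (simp add: tan_arctan)
  hence "arctan (tan (arctan a - arctan b)) = arctan ((a - b) / (1 + a * b))" by simp
  thus ?thesis using arctan_tan[OF bds] by simp
qed

lemma atc_nonneg: "atc y \<ge> 0"
  unfolding atc_def
  by (cases "y > 0") (auto simp: divide_nonneg_pos divide_nonpos_neg arctan_less_zero_iff zero_le_arctan_iff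
                      intro: divide_nonpos_neg)

lemma hf_nonneg: "t \<ge> 0 \<Longrightarrow> x \<in> {0..1} \<Longrightarrow> hf t x \<ge> 0"
  unfolding hf_def using atc_nonneg Dd_pos[of x t] by auto

lemma ftc_inv:
  fixes u :: real
  assumes u: "0 < u" "u < 1"
  shows "((\<lambda>x. 1/x) has_integral (ln (1+u) - ln (1-u))) {(1-u)/(1+u)..1}"
proof -
  have a: "(1-u)/(1+u) > 0" "(1-u)/(1+u) \<le> 1"
    using u by (simp add: divide_pos_pos, simp add: divide_le_eq)
  have "((\<lambda>x. 1/x) has_integral (ln 1 - ln ((1-u)/(1+u)))) {(1-u)/(1+u)..1}"
  proof (rule fundamental_theorem_of_calculus[OF a(2)])
    fix x assume "x \<in> {(1-u)/(1+u)..1::real}"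
    hence "x > 0" using a by auto
    thus "(ln has_vector_derivative 1/x) (at x within {(1-u)/(1+u)..1})"
      by (auto intro!: derivative_eq_intros simp: has_real_derivative_iff_has_vector_derivative[symmetric]
               intro: has_field_derivative_at_within)
  qed
  moreover have "ln 1 - ln ((1-u)/(1+u)) = ln (1+u) - ln (1-u)" using u by (simp add: ln_div)
  ultimately show ?thesis by simp
qed

lemma ftc_atn:
  fixes x t :: real
  assumes x: "0 < x" "x \<le> 1"
  shows "((\<lambda>u. t/(1+t^2*u^2)) has_integral (arctan t - arctan (t*(1-x)/(1+x)))) {(1-x)/(1+x)..1}"
proof -
  have a: "(1-x)/(1+x) \<le> 1" using x by (simp add: divide_le_eq)
  have "((\<lambda>u. t/(1+t^2*u^2)) has_integral (arctan (t*1) - arctan (t*((1-x)/(1+x))))) {(1-x)/(1+x)..1}"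
  proof (rule fundamental_theorem_of_calculus[OF a])
    fix u assume "u \<in> {(1-x)/(1+x)..1::real}"
    have "((\<lambda>u. arctan (t*u)) has_real_derivative t/(1+t^2*u^2)) (at u)"
      by (auto intro!: derivative_eq_intros simp: power_mult_distrib field_simps)
    thus "((\<lambda>u. arctan (t*u)) has_vector_derivative t/(1+t^2*u^2)) (at u within {(1-x)/(1+x)..1})"
      by (auto simp: has_real_derivative_iff_has_vector_derivative[symmetric]
               intro: has_field_derivative_at_within)
  qed
  thus ?thesis by simp
qed

lemma atn_hf:
  fixes x t :: real
  assumes t: "t > 0" and x: "0 < x" "x \<le> 1"
  shows "(arctan t - arctan (t*(1-x)/(1+x))) / x = hf t x"
proof -
  have "arctan t - arctan (t*(1-x)/(1+x)) = arctan ((t - t*(1-x)/(1+x)) / (1 + t * (t*(1-x)/(1+x))))"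
    using t x by (intro arctan_diff) auto
  also have "(t - t*(1-x)/(1+x)) / (1 + t * (t*(1-x)/(1+x))) = 2*t*x / Dd t x"
  proof -
    have "t - t*(1-x)/(1+x) = 2*t*x/(1+x)" using x by (simp add: field_simps)
    moreover have "1 + t * (t*(1-x)/(1+x)) = Dd t x/(1+x)" using x by (simp add: field_simps Dd_def power2_eq_square)
    ultimately show ?thesis using x Dd_pos[of x t] by simp
  qed
  finally show ?thesis using hf_pos_x[of x t] x by simp
qed



lemma J_eq_C:
  fixes t :: real
  assumes t: "t > 0"
  shows "(\<integral>\<^sup>+u. ennreal (t * (ln (1+u) - ln (1-u)) / (1 + t^2*u^2)) * indicator {0<..<1} u \<partial>lborel)
         = ennreal (Cf t)"
proof -
  define k where "k u = t/(1+t^2*u^2)" for u :: real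
  have k0: "k u \<ge> 0" for u unfolding k_def using t by (simp add: add_pos_nonneg less_imp_le)
  define Hf where "Hf u x = ennreal (k u * (1/x)) * indicator {0..1} u * indicator {0..1} x
         * indicator {p. 1 - fst p \<le> snd p * (1 + fst p)} (u,x)" for u x :: real
  have meas: "(\<lambda>(u,x). Hf u x) \<in> borel_measurable (lborel \<Otimes>\<^sub>M lborel)"
    unfolding Hf_def k_def case_prod_unfold by measurable
  have step1: "(\<integral>\<^sup>+u. ennreal (t * (ln (1+u) - ln (1-u)) / (1 + t^2*u^2)) * indicator {0<..<1} u \<partial>lborel)
       = (\<integral>\<^sup>+u. (\<integral>\<^sup>+x. Hf u x \<partial>lborel) \<partial>lborel)"
  proof (rule nn_integral_cong_AE)
    show "AE u in lborel. ennreal (t * (ln (1+u) - ln (1-u)) / (1 + t^2*u^2)) * indicator {0<..<1} u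
          = (\<integral>\<^sup>+x. Hf u x \<partial>lborel)"
      using AE_lborel_singleton[of 0] AE_lborel_singleton[of 1]
    proof eventually_elim
      fix u :: real assume u: "u \<noteq> 0" "u \<noteq> 1"
      show "ennreal (t * (ln (1+u) - ln (1-u)) / (1 + t^2*u^2)) * indicator {0<..<1} u
          = (\<integral>\<^sup>+x. Hf u x \<partial>lborel)"
      proof (cases "u \<in> {0<..<1}")
        case False
        hence "u \<notin> {0..1}" using u by auto
        thus ?thesis using False by (simp add: Hf_def)
      next
        case True
        hence u01: "0 < u" "u < 1" by auto
        have a0: "(1-u)/(1+u) \<ge> 0" using u01 by simp
        have "(\<integral>\<^sup>+x. Hf u x \<partial>lborel) = (\<integral>\<^sup>+x. ennreal (k u) * (ennreal (1/x) * indicator {(1-u)/(1+u)..1} x) \<partial>lborel)"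
        proof (rule nn_integral_cong)
          fix x :: real
          show "Hf u x = ennreal (k u) * (ennreal (1/x) * indicator {(1-u)/(1+u)..1} x)"
          proof (cases "x \<in> {(1-u)/(1+u)..1}")
            case True
            hence x0: "x > 0" using u01 a0 by (auto simp: divide_pos_pos intro: less_le_trans[of 0 "(1-u)/(1+u)"])
            have c: "1 - u \<le> x * (1 + u)" using True u01 by (simp add: divide_le_eq)
            have m: "ennreal (k u) * ennreal (1/x) = ennreal (k u / x)"
              using ennreal_mult[of "k u" "1/x"] k0[of u] x0 by simp
            show ?thesis using True x0 u01 c m
              by (simp add: Hf_def indicator_def)
          next
            case False
            have "\<not> (x \<in> {0..1} \<and> 1 - u \<le> x * (1 + u))"
              using False u01 by (auto simp: divide_le_eq)
            thus ?thesis using False by (auto simp: Hf_def indicator_def)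
          qed
        qed
        also have "\<dots> = ennreal (k u) * (\<integral>\<^sup>+x. ennreal (1/x) * indicator {(1-u)/(1+u)..1} x \<partial>lborel)"
          by (rule nn_integral_cmult) measurable
        also have "(\<integral>\<^sup>+x. ennreal (1/x) * indicator {(1-u)/(1+u)..1} x \<partial>lborel) = ennreal (ln (1+u) - ln (1-u))"
          by (rule nn_integral_has_integral_lebesgue'[OF _ ftc_inv[OF u01]])
             (use a0 u01 in \<open>auto intro: order_trans[OF a0]\<close>)
        also have "ennreal (k u) * ennreal (ln (1+u) - ln (1-u)) = ennreal (t * (ln (1+u) - ln (1-u)) / (1 + t^2*u^2))"
        proof -
          have "ln (1-u) \<le> ln (1+u)" using u01 by simp
          thus ?thesis using k0[of u] by (simp add: ennreal_mult[symmetric] k_def)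
        qed
        finally show ?thesis using True by simp
      qed
    qed
  qed
  also have "\<dots> = (\<integral>\<^sup>+x. (\<integral>\<^sup>+u. Hf u x \<partial>lborel) \<partial>lborel)"
    by (rule lborel_pair.Fubini'[symmetric]) (use meas in simp)
  also have "\<dots> = (\<integral>\<^sup>+x. ennreal (hf t x) * indicator {0..1} x \<partial>lborel)"
  proof (rule nn_integral_cong_AE)
    show "AE x in lborel. (\<integral>\<^sup>+u. Hf u x \<partial>lborel) = ennreal (hf t x) * indicator {0..1} x"
      using AE_lborel_singleton[of 0]
    proof eventually_elim
      fix x :: real assume x: "x \<noteq> 0"
      show "(\<integral>\<^sup>+u. Hf u x \<partial>lborel) = ennreal (hf t x) * indicator {0..1} x"
      proof (cases "x \<in> {0..1}")
        case False
        thus ?thesis by (simp add: Hf_def)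
      next
        case True
        hence x01: "0 < x" "x \<le> 1" using x by auto
        have a0: "(1-x)/(1+x) \<ge> 0" using x01 by simp
        have "(\<integral>\<^sup>+u. Hf u x \<partial>lborel) = (\<integral>\<^sup>+u. ennreal (1/x) * (ennreal (k u) * indicator {(1-x)/(1+x)..1} u) \<partial>lborel)"
        proof (rule nn_integral_cong)
          fix u :: real
          have iff: "(u \<in> {0..1} \<and> 1 - u \<le> x * (1 + u)) \<longleftrightarrow> u \<in> {(1-x)/(1+x)..1}"
          proof
            assume "u \<in> {0..1} \<and> 1 - u \<le> x * (1 + u)"
            hence "1 - x \<le> u * (1 + x)" "u \<le> 1" by (auto simp: algebra_simps)
            thus "u \<in> {(1-x)/(1+x)..1}" using x01 by (simp add: divide_le_eq mult.commute)
          next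
            assume "u \<in> {(1-x)/(1+x)..1}"
            hence "1 - x \<le> u * (1 + x)" "u \<le> 1" "u \<ge> 0" using x01 a0
              by (auto simp: divide_le_eq mult.commute intro: order_trans[OF a0])
            thus "u \<in> {0..1} \<and> 1 - u \<le> x * (1 + u)" by (auto simp: algebra_simps)
          qed
          have m: "ennreal (k u) * ennreal (1/x) = ennreal (k u / x)"
            using ennreal_mult[of "k u" "1/x"] k0[of u] x01 by simp
          show "Hf u x = ennreal (1/x) * (ennreal (k u) * indicator {(1-x)/(1+x)..1} u)"
            using iff True x01 k0[of u] m
            by (cases "u \<in> {(1-x)/(1+x)..1}") (auto simp: Hf_def indicator_def ennreal_mult mult.commute)
        qed
        also have "\<dots> = ennreal (1/x) * (\<integral>\<^sup>+u. ennreal (k u) * indicator {(1-x)/(1+x)..1} u \<partial>lborel)"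
          by (rule nn_integral_cmult) (unfold k_def, measurable)
        also have "(\<integral>\<^sup>+u. ennreal (k u) * indicator {(1-x)/(1+x)..1} u \<partial>lborel)
                   = ennreal (arctan t - arctan (t*(1-x)/(1+x)))"
          unfolding k_def by (rule nn_integral_has_integral_lebesgue'[OF _ ftc_atn[OF x01]])
             (use t in \<open>auto simp: add_pos_nonneg less_imp_le\<close>)
        also have "ennreal (1/x) * ennreal (arctan t - arctan (t*(1-x)/(1+x))) = ennreal (hf t x)"
        proof -
          have "t*(1-x)/(1+x) \<le> t" using t x01 by (simp add: divide_le_eq mult_left_le)
          hence "arctan (t*(1-x)/(1+x)) \<le> arctan t" by (simp add: arctan_monotone')
          hence "ennreal (1/x) * ennreal (arctan t - arctan (t*(1-x)/(1+x)))
                 = ennreal ((arctan t - arctan (t*(1-x)/(1+x))) / x)"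
            using x01 by (simp add: ennreal_mult[symmetric])
          thus ?thesis using atn_hf[OF t x01] by simp
        qed
        finally show ?thesis using True by simp
      qed
    qed
  qed
  also have "\<dots> = ennreal (Cf t)"
    unfolding Cf_def
    by (rule nn_integral_has_integral_lebesgue'[OF _ integrable_integral[OF integrable_continuous_interval[OF cont_hf]]])
       (use t hf_nonneg in auto)
  finally show ?thesis .
qed



lemma nn_open_closed:
  fixes f :: "real \<Rightarrow> ennreal"
  shows "(\<integral>\<^sup>+x. f x * indicator {a<..<b} x \<partial>lborel) = (\<integral>\<^sup>+x. f x * indicator {a..b} x \<partial>lborel)"
proof (rule nn_integral_cong_AE)
  show "AE x in lborel. f x * indicator {a<..<b} x = f x * indicator {a..b} x"
    using AE_lborel_singleton[of a] AE_lborel_singleton[of b]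
    by eventually_elim (auto simp: indicator_def)
qed

lemma ftc_lnz:
  fixes z :: real
  assumes z: "0 < z" "z < 1"
  shows "((\<lambda>u. 2*z^2*u/(1-z^2*u^2)) has_integral (- ln (1-z^2))) {0..1}"
proof -
  have "((\<lambda>u. 2*z^2*u/(1-z^2*u^2)) has_integral ((- ln (1-z^2*1^2)) - (- ln (1-z^2*0^2)))) {0..1}"
  proof (rule fundamental_theorem_of_calculus)
    fix u :: real assume u: "u \<in> {0..1}"
    have "z^2*u^2 \<le> z^2 * 1" using u z by (intro mult_left_mono) (auto simp: power_le_one)
    moreover have "z^2 < 1" using z by (simp add: power_less_one_iff abs_less_iff)
    ultimately have p: "1 - z^2*u^2 > 0" by linarith
    have "((\<lambda>u. - ln (1-z^2*u^2)) has_real_derivative 2*z^2*u/(1-z^2*u^2)) (at u)"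
      using p by (auto intro!: derivative_eq_intros simp: field_simps power2_eq_square)
    thus "((\<lambda>u. - ln (1-z^2*u^2)) has_vector_derivative 2*z^2*u/(1-z^2*u^2)) (at u within {0..1})"
      by (auto simp: has_real_derivative_iff_has_vector_derivative[symmetric] intro: has_field_derivative_at_within)
  qed simp
  thus ?thesis by simp
qed

lemma ftc_ut:
  fixes t th :: real
  shows "((\<lambda>u. 2*u*t^2*th/(1+t^2*u^2)) has_integral (th * ln (1+t^2))) {0..1}"
proof -
  have "((\<lambda>u. 2*u*t^2*th/(1+t^2*u^2)) has_integral (th * ln (1+t^2*1^2) - th * ln (1+t^2*0^2))) {0..1}"
  proof (rule fundamental_theorem_of_calculus)
    fix u :: real assume u: "u \<in> {0..1}"
    have p: "1 + t^2*u^2 > 0" by (simp add: add_pos_nonneg)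
    have "((\<lambda>u. th * ln (1+t^2*u^2)) has_real_derivative 2*u*t^2*th/(1+t^2*u^2)) (at u)"
      using p by (auto intro!: derivative_eq_intros simp: field_simps power2_eq_square)
    thus "((\<lambda>u. th * ln (1+t^2*u^2)) has_vector_derivative 2*u*t^2*th/(1+t^2*u^2)) (at u within {0..1})"
      by (auto simp: has_real_derivative_iff_has_vector_derivative[symmetric] intro: has_field_derivative_at_within)
  qed simp
  thus ?thesis by simp
qed

lemma canc: "(p::real) \<noteq> 0 \<Longrightarrow> (a * p / q) * (b / p) = a * b / q"
proof -
  assume p: "p \<noteq> 0"
  have "(a * p / q) * (b / p) = (a * b) * p / (q * p)" by (simp add: algebra_simps)
  also have "\<dots> = a * b / q" using p by simp
  finally show ?thesis .
qed

lemma phi_alg: "(u::real) \<noteq> 0 \<Longrightarrow> p > 0 \<Longrightarrow> (2*u*t/p) * (L/(2*u) - t * w) = t*L/p - 2*u*t^2 * w/p"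
  by (simp add: field_simps power2_eq_square)

lemma ftc_inner:
  fixes u t :: real
  assumes u: "0 < u" "u < 1" and t: "t > 0"
  shows "((\<lambda>z. 2*u*t*z^2/((1-u^2*z^2)*(z^2+t^2))) has_integral
           (t*(ln (1+u) - ln (1-u))/(1+t^2*u^2) - 2*u*t^2* vartheta t/(1+t^2*u^2))) {0..1}"
proof -
  define c where "c = 2*u*t/(1+t^2*u^2)"
  define Phi where "Phi z = c * ((ln (1+u*z) - ln (1-u*z))/(2*u) - t * arctan (z/t))" for z
  have "((\<lambda>z. 2*u*t*z^2/((1-u^2*z^2)*(z^2+t^2))) has_integral (Phi 1 - Phi 0)) {0..1}"
  proof (rule fundamental_theorem_of_calculus)
    fix z :: real assume z: "z \<in> {0..1}"
    have uz1: "u*z < 1"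
    proof -
      have "u*z \<le> u" using mult_left_le[of z u] u z by auto
      thus ?thesis using u by linarith
    qed
    have "u*z \<ge> 0" using u z by simp
    hence d1: "1 - u*z > 0" "1 + u*z > 0" using uz1 by auto
    have d2: "z^2 + t^2 > 0" "1 + t^2*u^2 > 0" using t by (auto simp: add_pos_nonneg add_nonneg_pos)
    have "(Phi has_real_derivative 2*u*t*z^2/((1-u^2*z^2)*(z^2+t^2))) (at z)"
      unfolding Phi_def using d1 t u
      apply (auto intro!: derivative_eq_intros)
    proof -
      have e0: "u * 2 / (1 + u * z) + u * 2 / (1 - u * z) = (4*u) / ((1 + u*z) * (1 - u*z))"
        using d1 by (simp add: field_simps)
      have e1: "(u * 2 / (1 + u * z) + u * 2 / (1 - u * z)) / (4 * u) = 1/(1-u^2*z^2)"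
      proof -
        have P: "(1 + u*z) * (1 - u*z) = 1 - u^2*z^2" by (simp add: algebra_simps power2_eq_square)
        have "(4*u) / ((1 + u*z) * (1 - u*z)) / (4 * u) = 1 / ((1 + u*z) * (1 - u*z))"
          using u by simp
        thus ?thesis unfolding e0 P .
      qed
      have e2: "inverse (1 + (z / t)\<^sup>2) = t^2/(z^2+t^2)"
        using inv_aux[OF t, of z] by (simp add: add.commute)
      have d3: "1 - u^2*z^2 > 0"
      proof -
        have "1 - u^2*z^2 = (1 - u*z) * (1 + u*z)" by (simp add: algebra_simps power2_eq_square)
        thus ?thesis using d1 by simp
      qed
      have e3: "1/(1-u^2*z^2) - t^2/(z^2+t^2) = z^2*(1+t^2*u^2)/((1-u^2*z^2)*(z^2+t^2))"
      proof -
        have "1/(1-u^2*z^2) - t^2/(z^2+t^2) = (1 * (z^2+t^2) - t^2 * (1-u^2*z^2))/((1-u^2*z^2)*(z^2+t^2))"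
          using d2 d3 by (intro diff_frac_eq) auto
        also have "1 * (z^2+t^2) - t^2 * (1-u^2*z^2) = z^2*(1+t^2*u^2)" by (simp add: algebra_simps)
        finally show ?thesis .
      qed
      show "((u * 2 / (1 + u * z) + u * 2 / (1 - u * z)) / (4 * u) - inverse (1 + (z / t)\<^sup>2)) * c =
        2 * u * t * z\<^sup>2 / ((1 - u\<^sup>2 * z\<^sup>2) * (z\<^sup>2 + t\<^sup>2))"
        unfolding e1 e2 e3 c_def using canc[of "1+t^2*u^2" "z^2" "(1-u^2*z^2)*(z^2+t^2)" "2*u*t"] d2
        by (simp add: mult.commute mult.left_commute)
    qed
    thus "(Phi has_vector_derivative 2*u*t*z^2/((1-u^2*z^2)*(z^2+t^2))) (at z within {0..1})"
      by (auto simp: has_real_derivative_iff_has_vector_derivative[symmetric] intro: has_field_derivative_at_within)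
  qed simp
  moreover have "Phi 1 - Phi 0 = t*(ln (1+u) - ln (1-u))/(1+t^2*u^2) - 2*u*t^2* vartheta t/(1+t^2*u^2)"
  proof -
    have "Phi 0 = 0" unfolding Phi_def by simp
    moreover have "Phi 1 = c * ((ln (1+u) - ln (1-u))/(2*u) - t * vartheta t)"
      unfolding Phi_def vartheta_def by simp
    moreover have "c * ((ln (1+u) - ln (1-u))/(2*u) - t * vartheta t)
       = t*(ln (1+u) - ln (1-u))/(1+t^2*u^2) - 2*u*t^2 * vartheta t/(1+t^2*u^2)"
      unfolding c_def using u by (intro phi_alg) (auto simp: add_pos_nonneg)
    ultimately show ?thesis by simp
  qed
  ultimately show ?thesis by simp
qed



lemma vt_pos: "t > 0 \<Longrightarrow> vartheta t > 0"
  unfolding vartheta_def by (simp add: zero_less_arctan_iff)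

lemma Cf_nonneg: "t \<ge> 0 \<Longrightarrow> Cf t \<ge> 0"
  unfolding Cf_def by (rule integral_nonneg[OF integrable_continuous_interval[OF cont_hf]]) (auto intro: hf_nonneg)

lemma M_eq:
  fixes t :: real
  assumes t: "t > 0"
  shows "(\<integral>\<^sup>+z. ennreal (- ln (1-z^2) * (t/(z^2+t^2))) * indicator {0<..<1} z \<partial>lborel)
           = ennreal (Cf t - vartheta t * ln (1+t^2))"
    and "vartheta t * ln (1+t^2) \<le> Cf t"
proof -
  define K where "K z u = ennreal (2*z^2*u/(1-z^2*u^2) * (t/(z^2+t^2))) * indicator {0..1} z * indicator {0..1} u"
    for z u :: real
  define Gv where "Gv u = t*(ln (1+u) - ln (1-u))/(1+t^2*u^2) - 2*u*t^2 * vartheta t/(1+t^2*u^2)" for u :: real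
  define M where "M = (\<integral>\<^sup>+z. ennreal (- ln (1-z^2) * (t/(z^2+t^2))) * indicator {0<..<1} z \<partial>lborel)"
  have meas: "(\<lambda>(z,u). K z u) \<in> borel_measurable (lborel \<Otimes>\<^sub>M lborel)"
    unfolding K_def case_prod_unfold by measurable
  have tz: "t/(z^2+t^2) \<ge> 0" for z using t by (simp add: add_nonneg_pos less_imp_le)
  have A: "M = (\<integral>\<^sup>+z. (\<integral>\<^sup>+u. K z u \<partial>lborel) \<partial>lborel)"
    unfolding M_def
  proof (rule nn_integral_cong_AE)
    show "AE z in lborel. ennreal (- ln (1-z^2) * (t/(z^2+t^2))) * indicator {0<..<1} z = (\<integral>\<^sup>+u. K z u \<partial>lborel)"
      using AE_lborel_singleton[of 0] AE_lborel_singleton[of 1]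
    proof eventually_elim
      fix z :: real assume z: "z \<noteq> 0" "z \<noteq> 1"
      show "ennreal (- ln (1-z^2) * (t/(z^2+t^2))) * indicator {0<..<1} z = (\<integral>\<^sup>+u. K z u \<partial>lborel)"
      proof (cases "z \<in> {0<..<1}")
        case False
        hence "z \<notin> {0..1}" using z by auto
        thus ?thesis using False by (simp add: K_def)
      next
        case True
        hence z01: "0 < z" "z < 1" by auto
        have pos: "2*z^2*u/(1-z^2*u^2) \<ge> 0" if "u \<in> {0..1}" for u
        proof -
          have "z^2*u^2 \<le> z^2 * 1" using that z01 by (intro mult_left_mono) (auto simp: power_le_one)
          moreover have "z^2 < 1" using z01 by (simp add: power_less_one_iff abs_less_iff)
          ultimately have "1 - z^2*u^2 > 0" by linarith
          thus ?thesis using that by simp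
        qed
        have "(\<integral>\<^sup>+u. K z u \<partial>lborel) = (\<integral>\<^sup>+u. ennreal (t/(z^2+t^2)) * (ennreal (2*z^2*u/(1-z^2*u^2)) * indicator {0..1} u) \<partial>lborel)"
        proof (rule nn_integral_cong)
          fix u :: real
          show "K z u = ennreal (t/(z^2+t^2)) * (ennreal (2*z^2*u/(1-z^2*u^2)) * indicator {0..1} u)"
            using pos[of u] tz[of z] True
            by (cases "u \<in> {0..1}") (auto simp: K_def ennreal_mult[symmetric] mult.commute)
        qed
        also have "\<dots> = ennreal (t/(z^2+t^2)) * (\<integral>\<^sup>+u. ennreal (2*z^2*u/(1-z^2*u^2)) * indicator {0..1} u \<partial>lborel)"
          by (rule nn_integral_cmult) measurable
        also have "(\<integral>\<^sup>+u. ennreal (2*z^2*u/(1-z^2*u^2)) * indicator {0..1} u \<partial>lborel) = ennreal (- ln (1-z^2))"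
          by (rule nn_integral_has_integral_lebesgue'[OF _ ftc_lnz[OF z01]]) (use pos in auto)
        also have "ennreal (t/(z^2+t^2)) * ennreal (- ln (1-z^2)) = ennreal (- ln (1-z^2) * (t/(z^2+t^2)))"
        proof -
          have "z^2 < 1" using z01 by (simp add: power_less_one_iff abs_less_iff)
          hence "0 < 1 - z^2" "1 - z^2 \<le> 1" by auto
          hence "ln (1-z^2) \<le> 0" by (simp add: ln_le_zero_iff)
          thus ?thesis using tz[of z] by (simp add: ennreal_mult[symmetric] mult.commute)
        qed
        finally show ?thesis using True by simp
      qed
    qed
  qed
  also have "\<dots> = (\<integral>\<^sup>+u. (\<integral>\<^sup>+z. K z u \<partial>lborel) \<partial>lborel)"
    by (rule lborel_pair.Fubini'[symmetric]) (use meas in simp)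
  also have "\<dots> = (\<integral>\<^sup>+u. ennreal (Gv u) * indicator {0<..<1} u \<partial>lborel)"
  proof (rule nn_integral_cong_AE)
    show "AE u in lborel. (\<integral>\<^sup>+z. K z u \<partial>lborel) = ennreal (Gv u) * indicator {0<..<1} u"
      using AE_lborel_singleton[of 0] AE_lborel_singleton[of 1]
    proof eventually_elim
      fix u :: real assume u: "u \<noteq> 0" "u \<noteq> 1"
      show "(\<integral>\<^sup>+z. K z u \<partial>lborel) = ennreal (Gv u) * indicator {0<..<1} u"
      proof (cases "u \<in> {0<..<1}")
        case False
        hence "u \<notin> {0..1}" using u by auto
        thus ?thesis using False by (simp add: K_def)
      next
        case True
        hence u01: "0 < u" "u < 1" by auto
        have pos: "2*u*t*z^2/((1-u^2*z^2)*(z^2+t^2)) \<ge> 0" if "z \<in> {0..1}" for z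
        proof -
          have "u^2*z^2 \<le> u^2 * 1" using that u01 by (intro mult_left_mono) (auto simp: power_le_one)
          moreover have "u^2 < 1" using u01 by (simp add: power_less_one_iff abs_less_iff)
          ultimately have "1 - u^2*z^2 > 0" by linarith
          moreover have "z^2 + t^2 > 0" using t by (simp add: add_nonneg_pos)
          ultimately show ?thesis using u01 t by simp
        qed
        have "(\<integral>\<^sup>+z. K z u \<partial>lborel) = (\<integral>\<^sup>+z. ennreal (2*u*t*z^2/((1-u^2*z^2)*(z^2+t^2))) * indicator {0..1} z \<partial>lborel)"
        proof (rule nn_integral_cong)
          fix z :: real
          have "2*z^2*u/(1-z^2*u^2) * (t/(z^2+t^2)) = 2*u*t*z^2/((1-u^2*z^2)*(z^2+t^2))"
            by (simp add: mult.commute mult.left_commute)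
          thus "K z u = ennreal (2*u*t*z^2/((1-u^2*z^2)*(z^2+t^2))) * indicator {0..1} z"
            using True by (simp add: K_def)
        qed
        also have "\<dots> = ennreal (Gv u)"
          unfolding Gv_def by (rule nn_integral_has_integral_lebesgue'[OF _ ftc_inner[OF u01 t]]) (use pos in auto)
        finally show ?thesis using True by simp
      qed
    qed
  qed
  finally have MG: "M = (\<integral>\<^sup>+u. ennreal (Gv u) * indicator {0<..<1} u \<partial>lborel)" .
  have Gv_nonneg: "Gv u \<ge> 0" if "0 < u" "u < 1" for u
  proof -
    have "((\<lambda>z. 2*u*t*z^2/((1-u^2*z^2)*(z^2+t^2))) has_integral Gv u) {0..1}"
      unfolding Gv_def by (rule ftc_inner[OF that t])
    moreover have "2*u*t*z^2/((1-u^2*z^2)*(z^2+t^2)) \<ge> 0" if z: "z \<in> {0..1}" for z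
    proof -
      have "u^2*z^2 \<le> u^2 * 1" using z \<open>0 < u\<close> by (intro mult_left_mono) (auto simp: power_le_one)
      moreover have "u^2 < 1" using \<open>0 < u\<close> \<open>u < 1\<close> by (simp add: power_less_one_iff abs_less_iff)
      ultimately have "1 - u^2*z^2 > 0" by linarith
      moreover have "z^2 + t^2 > 0" using t by (simp add: add_nonneg_pos)
      ultimately show ?thesis using \<open>0 < u\<close> t by simp
    qed
    ultimately show ?thesis by (rule has_integral_nonneg)
  qed
  have vt0: "vartheta t > 0" using vt_pos[OF t] .
  have W: "ennreal (vartheta t * ln (1+t^2)) = (\<integral>\<^sup>+u. ennreal (2*u*t^2 * vartheta t/(1+t^2*u^2)) * indicator {0<..<1} u \<partial>lborel)"
    unfolding nn_open_closed
    by (rule nn_integral_has_integral_lebesgue'[OF _ ftc_ut, symmetric])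
       (use vt0 in \<open>auto simp: add_pos_nonneg less_imp_le\<close>)
  have "M + ennreal (vartheta t * ln (1+t^2))
      = (\<integral>\<^sup>+u. ennreal (Gv u) * indicator {0<..<1} u + ennreal (2*u*t^2 * vartheta t/(1+t^2*u^2)) * indicator {0<..<1} u \<partial>lborel)"
    unfolding MG W by (rule nn_integral_add[symmetric]) (unfold Gv_def, measurable)+
  also have "\<dots> = (\<integral>\<^sup>+u. ennreal (t * (ln (1+u) - ln (1-u)) / (1 + t^2*u^2)) * indicator {0<..<1} u \<partial>lborel)"
  proof (rule nn_integral_cong)
    fix u :: real
    show "ennreal (Gv u) * indicator {0<..<1} u + ennreal (2*u*t^2 * vartheta t/(1+t^2*u^2)) * indicator {0<..<1} u
        = ennreal (t * (ln (1+u) - ln (1-u)) / (1 + t^2*u^2)) * indicator {0<..<1} u"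
    proof (cases "u \<in> {0<..<1}")
      case True
      have w0: "2*u*t^2 * vartheta t/(1+t^2*u^2) \<ge> 0" using True vt0 by (simp add: add_pos_nonneg less_imp_le)
      have "Gv u + 2*u*t^2 * vartheta t/(1+t^2*u^2) = t * (ln (1+u) - ln (1-u)) / (1 + t^2*u^2)"
        unfolding Gv_def by simp
      thus ?thesis using True Gv_nonneg[of u] w0 by (simp add: ennreal_plus[symmetric])
    qed simp
  qed
  also have "\<dots> = ennreal (Cf t)" by (rule J_eq_C[OF t])
  finally have sumeq: "M + ennreal (vartheta t * ln (1+t^2)) = ennreal (Cf t)" .
  have Lnn: "vartheta t * ln (1+t^2) \<ge> 0" using vt0 by simp
  have "ennreal (vartheta t * ln (1+t^2)) \<le> ennreal (Cf t)" unfolding sumeq[symmetric] by simp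
  thus le: "vartheta t * ln (1+t^2) \<le> Cf t" using Cf_nonneg[of t] t by simp
  have "M = ennreal (Cf t) - ennreal (vartheta t * ln (1+t^2))" unfolding sumeq[symmetric] by simp
  also have "\<dots> = ennreal (Cf t - vartheta t * ln (1+t^2))" using Lnn by (rule ennreal_minus)
  finally show "(\<integral>\<^sup>+z. ennreal (- ln (1-z^2) * (t/(z^2+t^2))) * indicator {0<..<1} z \<partial>lborel)
           = ennreal (Cf t - vartheta t * ln (1+t^2))" unfolding M_def .
qed



lemma ftc_lg:
  fixes z s :: real
  assumes z: "z > 0" and s: "s \<ge> 0"
  shows "((\<lambda>t. 2*t/(z^2+t^2)) has_integral ln (1 + s^2/z^2)) {0..s}"
proof -
  have "((\<lambda>t. 2*t/(z^2+t^2)) has_integral (ln (z^2+s^2) - ln (z^2+0^2))) {0..s}"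
  proof (rule fundamental_theorem_of_calculus[OF s])
    fix t :: real assume "t \<in> {0..s}"
    have p: "z^2 + t^2 > 0" using z by (simp add: add_pos_nonneg)
    have "((\<lambda>t. ln (z^2+t^2)) has_real_derivative 2*t/(z^2+t^2)) (at t)"
      using p by (auto intro!: derivative_eq_intros)
    thus "((\<lambda>t. ln (z^2+t^2)) has_vector_derivative 2*t/(z^2+t^2)) (at t within {0..s})"
      by (auto simp: has_real_derivative_iff_has_vector_derivative[symmetric] intro: has_field_derivative_at_within)
  qed
  moreover have "ln (z^2+s^2) - ln (z^2+0^2) = ln (1 + s^2/z^2)"
  proof -
    have "ln (z^2+s^2) - ln (z^2) = ln ((z^2+s^2)/z^2)" using z by (simp add: ln_div add_pos_nonneg)
    also have "(z^2+s^2)/z^2 = 1 + s^2/z^2" using z by (simp add: field_simps)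
    finally show ?thesis by simp
  qed
  ultimately show ?thesis by simp
qed

lemma N_eq:
  fixes s :: real
  assumes s: "s > 0"
  shows "(\<integral>\<^sup>+z. ennreal (- ln (1-z^2) * ln (1 + s^2/z^2)) * indicator {0<..<1} z \<partial>lborel) = ennreal (- Rhs s)"
    and "- Rhs s \<ge> 0"
proof -
  define P where "P z t = ennreal (- ln (1-z^2) * (2*t/(z^2+t^2))) * indicator {0<..<1} z * indicator {0..s} t"
    for z t :: real
  have meas: "(\<lambda>(z,t). P z t) \<in> borel_measurable (lborel \<Otimes>\<^sub>M lborel)"
    unfolding P_def case_prod_unfold by measurable
  have lnz: "- ln (1-z^2) \<ge> 0" if "0 < z" "z < 1" for z :: real
  proof -
    have "z^2 < 1" using that by (simp add: power_less_one_iff abs_less_iff)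
    hence "0 < 1 - z^2" "1 - z^2 \<le> 1" by auto
    thus ?thesis by (simp add: ln_le_zero_iff)
  qed
  have nnf: "\<And>t. t \<in> {0..s} \<Longrightarrow> 0 \<le> 2 * (Cf t - vartheta t * ln (1+t^2))"
  proof -
    fix t assume "t \<in> {0..s}"
    show "0 \<le> 2 * (Cf t - vartheta t * ln (1+t^2))"
    proof (cases "t = 0")
      case True thus ?thesis using Cf_nonneg[of 0] by simp
    next
      case False
      hence "t > 0" using \<open>t \<in> {0..s}\<close> by auto
      thus ?thesis using M_eq(2)[of t] by simp
    qed
  qed
  have "(\<integral>\<^sup>+z. ennreal (- ln (1-z^2) * ln (1 + s^2/z^2)) * indicator {0<..<1} z \<partial>lborel)
      = (\<integral>\<^sup>+z. (\<integral>\<^sup>+t. P z t \<partial>lborel) \<partial>lborel)"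
  proof (rule nn_integral_cong)
    fix z :: real
    show "ennreal (- ln (1-z^2) * ln (1 + s^2/z^2)) * indicator {0<..<1} z = (\<integral>\<^sup>+t. P z t \<partial>lborel)"
    proof (cases "z \<in> {0<..<1}")
      case False thus ?thesis by (simp add: P_def)
    next
      case True
      hence z01: "0 < z" "z < 1" by auto
      have pos: "2*t/(z^2+t^2) \<ge> 0" if "t \<in> {0..s}" for t
        using that z01 by (simp add: add_pos_nonneg)
      have "(\<integral>\<^sup>+t. P z t \<partial>lborel) = (\<integral>\<^sup>+t. ennreal (- ln (1-z^2)) * (ennreal (2*t/(z^2+t^2)) * indicator {0..s} t) \<partial>lborel)"
      proof (rule nn_integral_cong)
        fix t :: real
        show "P z t = ennreal (- ln (1-z^2)) * (ennreal (2*t/(z^2+t^2)) * indicator {0..s} t)"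
          using pos[of t] lnz[OF z01] True
          by (cases "t \<in> {0..s}") (auto simp: P_def ennreal_mult[symmetric])
      qed
      also have "\<dots> = ennreal (- ln (1-z^2)) * (\<integral>\<^sup>+t. ennreal (2*t/(z^2+t^2)) * indicator {0..s} t \<partial>lborel)"
        by (rule nn_integral_cmult) measurable
      also have "(\<integral>\<^sup>+t. ennreal (2*t/(z^2+t^2)) * indicator {0..s} t \<partial>lborel) = ennreal (ln (1 + s^2/z^2))"
        by (rule nn_integral_has_integral_lebesgue'[OF _ ftc_lg[OF z01(1)]]) (use pos s in auto)
      also have "ennreal (- ln (1-z^2)) * ennreal (ln (1 + s^2/z^2)) = ennreal (- ln (1-z^2) * ln (1 + s^2/z^2))"
        using lnz[OF z01] by (simp add: ennreal_mult[symmetric])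
      finally show ?thesis using True by simp
    qed
  qed
  also have "\<dots> = (\<integral>\<^sup>+t. (\<integral>\<^sup>+z. P z t \<partial>lborel) \<partial>lborel)"
    by (rule lborel_pair.Fubini'[symmetric]) (use meas in simp)
  also have "\<dots> = (\<integral>\<^sup>+t. ennreal (2 * (Cf t - vartheta t * ln (1+t^2))) * indicator {0..s} t \<partial>lborel)"
  proof (rule nn_integral_cong_AE)
    show "AE t in lborel. (\<integral>\<^sup>+z. P z t \<partial>lborel) = ennreal (2 * (Cf t - vartheta t * ln (1+t^2))) * indicator {0..s} t"
      using AE_lborel_singleton[of 0]
    proof eventually_elim
      fix t :: real assume t0: "t \<noteq> 0"
      show "(\<integral>\<^sup>+z. P z t \<partial>lborel) = ennreal (2 * (Cf t - vartheta t * ln (1+t^2))) * indicator {0..s} t"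
      proof (cases "t \<in> {0..s}")
        case False thus ?thesis by (simp add: P_def)
      next
        case True
        hence t: "t > 0" using t0 by auto
        have tz: "t/(z^2+t^2) \<ge> 0" for z using t by (simp add: add_nonneg_pos less_imp_le)
        have "(\<integral>\<^sup>+z. P z t \<partial>lborel) = (\<integral>\<^sup>+z. ennreal 2 * (ennreal (- ln (1-z^2) * (t/(z^2+t^2))) * indicator {0<..<1} z) \<partial>lborel)"
        proof (rule nn_integral_cong)
          fix z :: real
          show "P z t = ennreal 2 * (ennreal (- ln (1-z^2) * (t/(z^2+t^2))) * indicator {0<..<1} z)"
          proof (cases "z \<in> {0<..<1}")
            case True
            define a where "a = - ln (1-z^2) * (t/(z^2+t^2))"
            have a: "a \<ge> 0" unfolding a_def using True lnz[of z] tz[of z] by (intro mult_nonneg_nonneg) auto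
            have e: "- ln (1-z^2) * (2*t/(z^2+t^2)) = 2 * a" unfolding a_def by simp
            have m: "ennreal (- ln (1-z^2) * (2*t/(z^2+t^2))) = ennreal 2 * ennreal a"
              unfolding e by (rule ennreal_mult) (use a in auto)
            show ?thesis using True \<open>t \<in> {0..s}\<close> unfolding P_def m a_def[symmetric] by simp
          qed (simp add: P_def)
        qed
        also have "\<dots> = ennreal 2 * (\<integral>\<^sup>+z. ennreal (- ln (1-z^2) * (t/(z^2+t^2))) * indicator {0<..<1} z \<partial>lborel)"
          by (rule nn_integral_cmult) measurable
        also have "\<dots> = ennreal 2 * ennreal (Cf t - vartheta t * ln (1+t^2))" unfolding M_eq(1)[OF t] ..
        also have "\<dots> = ennreal (2 * (Cf t - vartheta t * ln (1+t^2)))"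
          by (rule ennreal_mult[symmetric]) (use M_eq(2)[OF t] in auto)
        finally show ?thesis using True by simp
      qed
    qed
  qed
  also have "\<dots> = ennreal (- Rhs s)"
    by (rule nn_integral_has_integral_lebesgue'[OF nnf Rhs_int[OF s]])
  finally show "(\<integral>\<^sup>+z. ennreal (- ln (1-z^2) * ln (1 + s^2/z^2)) * indicator {0<..<1} z \<partial>lborel) = ennreal (- Rhs s)" .
  show "- Rhs s \<ge> 0" by (rule has_integral_nonneg[OF Rhs_int[OF s] nnf])
qed



theorem mainTheorem11:
  fixes s :: real
  assumes "s > 0"
  shows "set_integrable lborel {0<..<1::real}
           (\<lambda>z. ln (1 - z^2) * ln (1 + s^2 / z^2))
       \<and> (LINT z:{0<..<1}|lborel. ln (1 - z^2) * ln (1 + s^2 / z^2))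
           = pi^2 / 2 + 4 * (1 - ln 2) * Q0 s - 2 * (vartheta s)^2
             + 2 * s * vartheta s * ln ((1 + s^2) / 4)
             - 2 * s * Cl2 (2 * vartheta s)"
proof -
  define g where "g z = indicator {0<..<1} z * (- ln (1-z^2) * ln (1 + s^2/z^2))" for z :: real
  have gnn: "g z \<ge> 0" for z
  proof (cases "z \<in> {0<..<1}")
    case True
    hence z: "0 < z" "z < 1" by auto
    have "z^2 < 1" using z by (simp add: power_less_one_iff abs_less_iff)
    hence "0 < 1 - z^2" "1 - z^2 \<le> 1" by auto
    hence "- ln (1-z^2) \<ge> 0" by (simp add: ln_le_zero_iff)
    moreover have "ln (1 + s^2/z^2) \<ge> 0" using z by simp
    ultimately have "- ln (1-z^2) * ln (1 + s^2/z^2) \<ge> 0" by (rule mult_nonneg_nonneg)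
    thus ?thesis using True by (simp add: g_def)
  qed (simp add: g_def)
  have "(\<integral>\<^sup>+z. ennreal (g z) \<partial>lborel) = (\<integral>\<^sup>+z. ennreal (- ln (1-z^2) * ln (1 + s^2/z^2)) * indicator {0<..<1} z \<partial>lborel)"
    by (rule nn_integral_cong) (simp add: g_def indicator_def)
  also have "\<dots> = ennreal (- Rhs s)" by (rule N_eq(1)[OF assms])
  finally have "(\<integral>\<^sup>+z. ennreal (g z) \<partial>lborel) = ennreal (- Rhs s)" .
  moreover have "g \<in> borel_measurable lborel" unfolding g_def by measurable
  ultimately have hb: "has_bochner_integral lborel g (- Rhs s)"
    by (intro has_bochner_integral_nn_integral) (use gnn N_eq(2)[OF assms] in auto)
  have eqf: "(\<lambda>z. indicator {0<..<1} z *\<^sub>R (ln (1 - z^2) * ln (1 + s^2 / z^2))) = (\<lambda>z. - g z)"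
    by (rule ext) (simp add: g_def)
  have hb2: "has_bochner_integral lborel (\<lambda>z. indicator {0<..<1} z *\<^sub>R (ln (1 - z^2) * ln (1 + s^2 / z^2))) (Rhs s)"
    unfolding eqf using has_bochner_integral_minus[OF hb] by simp
  show ?thesis
    unfolding set_integrable_def set_lebesgue_integral_def
    using hb2[unfolded has_bochner_integral_iff]
    by (simp add: Rhs_def)
qed


end
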